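(* Let $n=2$ and consider the infinite-horizon LTI primary problem in the context with scalar input, whose optimal closed-loop matrix $M+N\Theta$ is over-damped. Let $\lambda_1$ be a real eigenvalue of $M+N\Theta$ with right eigenvector $V_1$, and let the closed loop be initialised at this single real mode ($x(t_0)=V_1$, $x(t)=V_1e^{\lambda_1t}$). If every eigenvalue $\bar\lambda$ of $\lambda_1I+M$ satisfies $\mathrm{Re}(\bar\lambda)<0$, then the hard-constrained IOC problem (with $c_3=E$ known) does not converge to the true weights.
   Context: Primary LTI problem: minimize $\int_{t_0}^{\infty}(x^TDx+u^TEu)\,dt$ subject to $\dot x=Mx+Nu$, $x(t_0)=x_0$, $x\in\mathbb{R}^n$, scalar $u$, $D$ diagonal nonnegative (unknown), $E>0$ known. The optimal control is $u=\Theta x$, $\Theta=-E^{-1}N^T\Pi$, with $\Pi$ the stabilizing solution of $M^T\Pi+\Pi M+D-\Pi NE^{-1}N^T\Pi=0$. The cost is $c^T\phi$ with $\phi=(x_1^2,\dots,x_n^2,u^2)^T$, $c=(D_{11},\dots,D_{nn},E)^T$. Hard-constrained IOC method: with $\nabla_x\phi(t)=\begin{bmatrix}2\,\mathrm{diag}(x(t))\\0_{1\times n}\end{bmatrix}$ and $\nabla_u\phi(t)=(0,\dots,0,2u(t))^T$ along the measured trajectories, let $L(t)=\int_t^{\infty}e^{-M^T(t-\tau)}\nabla_x\phi^T(\tau)\,d\tau$ (so that the costate is $p=Lc$), $W_1(t)=\nabla_u\phi^T(t)+N^TL(t)$, $W=\int_{t_0}^{\infty}W_1^T(t)W_1(t)\,dt$;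 the IOC problem is to minimize $c^TWc$ over $c$ with the known component fixed. *)

theory Defs
  imports "HOL-Analysis.Analysis"
begin

text \<open>State dimension n = 2 (index type 2), scalar input.
 Matrices are real^'n^'m (m rows, n columns); row vectors are plain vectors used with v*.\<close>

fun mpow :: "real^'n^'n \<Rightarrow> nat \<Rightarrow> real^'n^'n" where
  "mpow A 0 = mat 1"
| "mpow A (Suc k) = A ** mpow A k"

definition mexp :: "real^'n^'n \<Rightarrow> real^'n^'n" where
  "mexp A = (\<Sum>k. (1 / fact k :: real) *\<^sub>R mpow A k)"

definition cmat :: "real^'n^'n \<Rightarrow> complex^'n^'n" where
  "cmat A = (\<chi> i j. complex_of_real (A $ i $ j))"

definition is_eigenvalue :: "real^'n^'n \<Rightarrow> complex \<Rightarrow> bool" where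
  "is_eigenvalue A z \<longleftrightarrow> det (mat z - cmat A) = 0"

definition hurwitz :: "real^'n^'n \<Rightarrow> bool" where
  "hurwitz A \<longleftrightarrow> (\<forall>z. is_eigenvalue A z \<longrightarrow> Re z < 0)"

definition outer :: "real^'m \<Rightarrow> real^'n \<Rightarrow> real^'n^'m" where
  "outer a b = (\<chi> i j. a $ i * b $ j)"

definition gain :: "real^2 \<Rightarrow> real \<Rightarrow> real^2^2 \<Rightarrow> real^2" where
  "gain N E P = (- (1 / E)) *\<^sub>R (N v* P)"

definition closed_loop :: "real^2^2 \<Rightarrow> real^2 \<Rightarrow> real \<Rightarrow> real^2^2 \<Rightarrow> real^2^2" where
  "closed_loop M N E P = M + outer N (gain N E P)"

definition stabilizing_ARE_solution ::
  "real^2^2 \<Rightarrow> real^2 \<Rightarrow> real^2^2 \<Rightarrow> real \<Rightarrow> real^2^2 \<Rightarrow> bool" where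
  "stabilizing_ARE_solution M N D E P \<longleftrightarrow>
     transpose P = P \<and>
     transpose M ** P + P ** M + D - (1 / E) *\<^sub>R (P ** outer N N ** P) = 0 \<and>
     hurwitz (closed_loop M N E P)"

definition overdamped :: "real^2^2 \<Rightarrow> bool" where
  "overdamped A \<longleftrightarrow> (\<exists>l1 l2 :: real. l1 \<noteq> l2 \<and> l1 < 0 \<and> l2 < 0 \<and>
      is_eigenvalue A (complex_of_real l1) \<and> is_eigenvalue A (complex_of_real l2))"

text \<open>Gradients of phi = (x1^2, x2^2, u^2): nabla_x phi^T is 2x3, nabla_u phi is in R^3.\<close>
definition gradx_T :: "real^2 \<Rightarrow> real^3^2" where
  "gradx_T x = (\<chi> i k. if (k = 1 \<and> i = 1) \<or> (k = 2 \<and> i = 2) then 2 * x $ i else 0)"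

definition gradu :: "real \<Rightarrow> real^3" where
  "gradu u = (\<chi> k. if k = 3 then 2 * u else 0)"

definition Lmat :: "real^2^2 \<Rightarrow> (real \<Rightarrow> real^2) \<Rightarrow> real \<Rightarrow> real^3^2" where
  "Lmat M x t = integral {t..} (\<lambda>\<tau>. mexp ((\<tau> - t) *\<^sub>R transpose M) ** gradx_T (x \<tau>))"

definition W1 :: "real^2^2 \<Rightarrow> real^2 \<Rightarrow> (real \<Rightarrow> real^2) \<Rightarrow> (real \<Rightarrow> real) \<Rightarrow> real \<Rightarrow> real^3" where
  "W1 M N x u t = gradu (u t) + N v* Lmat M x t"

definition Wmat :: "real^2^2 \<Rightarrow> real^2 \<Rightarrow> (real \<Rightarrow> real^2) \<Rightarrow> (real \<Rightarrow> real) \<Rightarrow> real \<Rightarrow> real^3^3" where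
  "Wmat M N x u t0 = integral {t0..} (\<lambda>t. outer (W1 M N x u t) (W1 M N x u t))"

definition ioc_minimizer :: "real^3^3 \<Rightarrow> real \<Rightarrow> real^3 \<Rightarrow> bool" where
  "ioc_minimizer W E c \<longleftrightarrow> c $ 3 = E \<and>
     (\<forall>c'. c' $ 3 = E \<longrightarrow> c \<bullet> (W *v c) \<le> c' \<bullet> (W *v c'))"

end

theory Submission
  imports Defs
begin

lemma shift_UNIV_has:
  fixes f :: "real \<Rightarrow> 'a::banach"
  assumes "(f has_integral I) UNIV"
  shows "((\<lambda>x. f (x + c)) has_integral I) UNIV"
proof -
  from assms have A: "\<forall>a b. f integrable_on cbox a b"
    and B: "\<forall>e>0. \<exists>B>0. \<forall>a b. ball 0 B \<subseteq> cbox a b \<longrightarrow> norm (integral (cbox a b) f - I) < e"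
    by (simp_all add: has_integral_alt')
  show ?thesis
  proof (subst has_integral_alt', intro conjI allI impI)
    fix a b :: real
    have "f integrable_on cbox (a + c) (b + c)" using A by blast
    from integrable_shift_cbox[OF this, of c] show "(\<lambda>x. if x \<in> UNIV then f (x + c) else 0) integrable_on cbox a b" by simp
  next
    fix e :: real assume "e > 0"
    then obtain B where B0: "B > 0" and HB: "\<forall>a b. ball 0 B \<subseteq> cbox a b \<longrightarrow> norm (integral (cbox a b) f - I) < e"
      using B by blast
    show "\<exists>B>0. \<forall>a b. ball 0 B \<subseteq> cbox a b \<longrightarrow> norm (integral (cbox a b) (\<lambda>x. if x \<in> UNIV then f (x + c) else 0) - I) < e"
    proof (intro exI[of _ "B + \<bar>c\<bar>"] conjI allI impI)
      show "0 < B + \<bar>c\<bar>" using B0 by simp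
      fix a b :: real assume H: "ball 0 (B + \<bar>c\<bar>) \<subseteq> cbox a b"
      have "ball 0 B \<subseteq> cbox (a + c) (b + c)"
      proof
        fix x :: real assume "x \<in> ball 0 B"
        then have "x - c \<in> ball 0 (B + \<bar>c\<bar>)" by (auto simp: dist_real_def)
        then have "x - c \<in> cbox a b" using H by blast
        then show "x \<in> cbox (a + c) (b + c)" by auto
      qed
      then have "norm (integral (cbox (a + c) (b + c)) f - I) < e" using HB by blast
      moreover have "integral (cbox a b) (\<lambda>x. f (x + c)) = integral (cbox (a + c) (b + c)) f"
        using integral_shift_cbox[of "a + c" c "b + c" f] by simp
      ultimately show "norm (integral (cbox a b) (\<lambda>x. if x \<in> UNIV then f (x + c) else 0) - I) < e" by simp
    qed
  qed
qed

lemma shift_UNIV: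
  fixes f :: "real \<Rightarrow> 'a::banach"
  shows "integral UNIV (\<lambda>x. f (x + c)) = integral UNIV f"
proof (cases "f integrable_on UNIV")
  case True
  then show ?thesis using shift_UNIV_has[of f _ c] by (meson integrable_integral integral_unique)
next
  case False
  have "\<not> (\<lambda>x. f (x + c)) integrable_on UNIV"
  proof
    assume "(\<lambda>x. f (x + c)) integrable_on UNIV"
    then obtain I where "((\<lambda>x. f (x + c)) has_integral I) UNIV" by (auto simp: integrable_on_def)
    from shift_UNIV_has[OF this, of "-c"] have "(f has_integral I) UNIV" by simp
    with False show False by (auto simp: integrable_on_def)
  qed
  with False show ?thesis by (simp add: not_integrable_integral)
qed

lemma shift_ge:
  fixes F :: "real \<Rightarrow> 'a::banach"
  shows "integral {t..} F = integral {0..} (\<lambda>s. F (s + t))"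
proof -
  have "integral {t..} F = integral UNIV (\<lambda>x. if x \<in> {t..} then F x else 0)"
    by (simp only: integral_restrict_UNIV)
  also have "\<dots> = integral UNIV (\<lambda>s. if s + t \<in> {t..} then F (s + t) else 0)"
    by (rule shift_UNIV[symmetric])
  also have "\<dots> = integral UNIV (\<lambda>s. if s \<in> {0..} then F (s + t) else 0)"
    by simp
  also have "\<dots> = integral {0..} (\<lambda>s. F (s + t))"
    by (simp only: integral_restrict_UNIV)
  finally show ?thesis .
qed


lemma gradx_scale: "gradx_T (k *\<^sub>R v) = k *\<^sub>R gradx_T v"
  by (simp add: vec_eq_iff gradx_T_def)

lemma gradu_scale: "gradu (k * a) = k *\<^sub>R gradu a"
  by (simp add: vec_eq_iff gradu_def)

lemma mm_scale_right: "(A::real^'n^'m) ** (k *\<^sub>R B) = k *\<^sub>R (A ** (B::real^'p^'n))"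
  by (simp add: vec_eq_iff matrix_matrix_mult_def sum_distrib_left mult_ac)

lemma vm_scale_right: "(v::real^'m) v* (k *\<^sub>R B) = k *\<^sub>R (v v* (B::real^'p^'m))"
  by (simp add: vec_eq_iff vector_matrix_mult_def sum_distrib_left mult_ac)

lemma outer_scale: "outer (a *\<^sub>R w) (a *\<^sub>R w) = (a * a) *\<^sub>R outer w (w::real^'n)"
  by (simp add: vec_eq_iff outer_def mult_ac)

lemma outer_mv: "outer w w *v c = (w \<bullet> c) *\<^sub>R (w::real^'n)"
  by (simp add: vec_eq_iff outer_def matrix_vector_mult_def inner_vec_def sum_distrib_left mult_ac)

lemma quad_outer: "c \<bullet> ((s *\<^sub>R outer w w) *v c) = s * (w \<bullet> c)^2" for w c :: "real^'n"
proof -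
  have "(s *\<^sub>R outer w w) *v c = s *\<^sub>R (outer w w *v c)"
    by (simp add: vec_eq_iff matrix_vector_mult_def sum_distrib_left mult_ac)
  then show ?thesis by (simp add: outer_mv inner_commute power2_eq_square)
qed

lemma quad_linear: "bounded_linear (\<lambda>W::real^'n^'n. c \<bullet> (W *v c))"
proof -
  have "linear (\<lambda>W::real^'n^'n. c \<bullet> (W *v c))"
    by (rule linearI) (simp_all add: matrix_vector_mult_def inner_vec_def vec_eq_iff
        sum.distrib sum_distrib_left algebra_simps)
  then show ?thesis by (simp add: linear_conv_bounded_linear)
qed

lemma inner3: "(w::real^3) \<bullet> c = w$1 * c$1 + w$2 * c$2 + w$3 * c$3"
  by (simp add: inner_vec_def sum_3)


theorem lemma2:
  fixes M :: "real^2^2" and N :: "real^2" and D :: "real^2^2" and E :: real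
    and P :: "real^2^2" and lam1 :: real and V1 :: "real^2"
  assumes D_diag: "\<forall>i j. i \<noteq> j \<longrightarrow> D $ i $ j = 0"
    and D_nonneg: "\<forall>i. D $ i $ i \<ge> 0"
    and E_pos: "E > 0"
    and Pi: "stabilizing_ARE_solution M N D E P"
    and od: "overdamped (closed_loop M N E P)"
    and eig: "V1 \<noteq> 0" "closed_loop M N E P *v V1 = lam1 *\<^sub>R V1"
    and shifted: "\<forall>z. is_eigenvalue (mat lam1 + M) z \<longrightarrow> Re z < 0"
  shows "let x = (\<lambda>t. exp (lam1 * t) *\<^sub>R V1);
             u = (\<lambda>t. gain N E P \<bullet> x t);
             c_true = (vector [D $ 1 $ 1, D $ 2 $ 2, E] :: real^3);
             W = Wmat M N x u 0
         in \<exists>c. ioc_minimizer W E c \<and> c \<noteq> c_true"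
proof -
  define x where "x = (\<lambda>t. exp (lam1 * t) *\<^sub>R V1)"
  define u where "u = (\<lambda>t. gain N E P \<bullet> x t)"
  define c_true where "c_true = (vector [D $ 1 $ 1, D $ 2 $ 2, E] :: real^3)"
  define G where "G = gradx_T V1"
  define K0 where "K0 = integral {0..} (\<lambda>s. exp (lam1 * s) *\<^sub>R (mexp (s *\<^sub>R transpose M) ** G))"
  define w where "w = gradu (gain N E P \<bullet> V1) + N v* K0"
  define g where "g = (\<lambda>t. exp (lam1 * t) * exp (lam1 * t))"
  have L: "Lmat M x t = exp (lam1 * t) *\<^sub>R K0" for t
  proof -
    have "Lmat M x t = integral {0..} (\<lambda>s. mexp ((s + t - t) *\<^sub>R transpose M) ** gradx_T (x (s + t)))"
      unfolding Lmat_def by (rule shift_ge)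
    also have "\<dots> = integral {0..} (\<lambda>s. exp (lam1 * t) *\<^sub>R (exp (lam1 * s) *\<^sub>R (mexp (s *\<^sub>R transpose M) ** G)))"
      by (simp add: x_def G_def gradx_scale mm_scale_right distrib_left exp_add mult.commute)
    also have "\<dots> = exp (lam1 * t) *\<^sub>R K0"
      by (simp only: integral_cmul K0_def)
    finally show ?thesis .
  qed
  have W1e: "W1 M N x u t = exp (lam1 * t) *\<^sub>R w" for t
    unfolding W1_def L by (simp add: u_def x_def w_def vm_scale_right gradu_scale scaleR_add_right)
  have Wm: "Wmat M N x u 0 = integral {0..} (\<lambda>t. g t *\<^sub>R outer w w)"
    unfolding Wmat_def W1e outer_scale g_def ..
  define \<beta> where "\<beta> = (if (\<lambda>t. g t *\<^sub>R outer w w) integrable_on {0..} then integral {0..} g else 0)"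
  have \<beta>0: "\<beta> \<ge> 0"
  proof (cases "g integrable_on {0..}")
    case True
    then show ?thesis unfolding \<beta>_def by (auto intro!: integral_nonneg simp: g_def)
  next
    case False
    then show ?thesis unfolding \<beta>_def by (simp add: not_integrable_integral)
  qed
  have Q: "c \<bullet> (Wmat M N x u 0 *v c) = \<beta> * (w \<bullet> c)^2" for c
  proof (cases "(\<lambda>t. g t *\<^sub>R outer w w) integrable_on {0..}")
    case True
    have "c \<bullet> (Wmat M N x u 0 *v c) = integral {0..} ((\<lambda>W::real^3^3. c \<bullet> (W *v c)) \<circ> (\<lambda>t. g t *\<^sub>R outer w w))"
      unfolding Wm by (rule integral_linear[OF True quad_linear, symmetric])
    also have "\<dots> = integral {0..} (\<lambda>t. g t * (w \<bullet> c)^2)"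
      by (simp add: o_def quad_outer)
    also have "\<dots> = \<beta> * (w \<bullet> c)^2" using True by (simp add: \<beta>_def)
    finally show ?thesis .
  next
    case False
    then show ?thesis unfolding Wm \<beta>_def by (simp add: not_integrable_integral)
  qed
  have "\<exists>c. ioc_minimizer (Wmat M N x u 0) E c \<and> c \<noteq> c_true"
  proof (cases "w$1 \<noteq> 0 \<or> w$2 \<noteq> 0")
    case True
    define s where "s = (w$1)^2 + (w$2)^2"
    have s0: "s > 0" using True unfolding s_def by (auto simp: add_pos_nonneg add_nonneg_pos)
    define p0 where "p0 = (vector [- (w$3 * E * w$1 / s), - (w$3 * E * w$2 / s), E] :: real^3)"
    define d where "d = (vector [- w$2, w$1, 0] :: real^3)"
    have wp0: "w \<bullet> p0 = 0"
    proof -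
      have "w \<bullet> p0 = w$3 * E - w$3 * E * ((w$1)^2 + (w$2)^2) / s"
        by (simp add: inner3 p0_def algebra_simps power2_eq_square add_divide_distrib)
      also have "\<dots> = 0" using s0 by (simp add: s_def[symmetric])
      finally show ?thesis .
    qed
    have wd: "w \<bullet> d = 0" by (simp add: inner3 d_def)
    have d0: "d \<noteq> 0"
    proof
      assume "d = 0"
      then have "d$1 = 0" "d$2 = 0" by simp_all
      with True show False by (simp add: d_def)
    qed
    define c where "c = (if p0 = c_true then p0 + d else p0)"
    have wc: "w \<bullet> c = 0" using wp0 wd by (cases "p0 = c_true") (simp_all add: c_def inner_add_right)
    have c3: "c $ 3 = E" by (simp add: c_def p0_def d_def c_true_def)
    have "c \<noteq> c_true" using d0 by (auto simp: c_def)
    moreover have "ioc_minimizer (Wmat M N x u 0) E c"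
      unfolding ioc_minimizer_def using c3 \<beta>0 by (simp add: Q wc)
    ultimately show ?thesis by blast
  next
    case False
    define c where "c = c_true + vector [1, 0, 0]"
    have c3: "c $ 3 = E" by (simp add: c_def c_true_def)
    have "c $ 1 \<noteq> c_true $ 1" by (simp add: c_def)
    then have "c \<noteq> c_true" by blast
    moreover have "ioc_minimizer (Wmat M N x u 0) E c"
      unfolding ioc_minimizer_def Q using c3 False by (simp add: inner3[of w])
    ultimately show ?thesis by blast
  qed
  then show ?thesis unfolding Let_def x_def u_def c_true_def by simp
qed

end
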